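(* Let $\{x^k\}$ be generated by Algorithm IRG with the backtracking stepsize rule, and assume $\rho_k\to0$. Suppose there is an infinite set $J\subset\mathbb N$ such that $x^k\to\bar x$ along $J$, and that $\nabla f$ is Lipschitz continuous on some neighborhood of $\bar x$. Then $\{t_k\}_{k\in J}$ is bounded away from zero, i.e. $\inf_{k\in J}t_k>0$.
   Context: Algorithm IRG (general inexact reduced gradient framework). Let $f:\mathbb R^n\to\mathbb R$ be continuously differentiable. Parameters: initial point $x^1\in\mathbb R^n$, initial radii $\varepsilon_1>0$, $r_1>0$, reduction factors $\mu,\theta\in(0,1)$, and a sequence $\{\rho_k\}$ of positive numbers. For $k=1,2,\dots$: (1) choose $g^k\in\mathbb R^n$ with $\|g^k-\nabla f(x^k)\|\le\min\{\varepsilon_k,\rho_k\}$; (2) if $\|g^k\|\le r_k+\varepsilon_k$, set $r_{k+1}=\mu r_k$, $\varepsilon_{k+1}=\theta\varepsilon_k$, $d^k=0$; otherwise set $r_{k+1}=r_k$, $\varepsilon_{k+1}=\varepsilon_k$ and $d^k=-\frac{\|g^k\|-\varepsilon_k}{\|g^k\|}g^k$; (3) choose a stepsize $t_k>0$ by some rule; (4) set $x^{k+1}=x^k+t_kd^k$. Backtracking stepsize rule: fix $\beta,\gamma,\tau\in(0,1)$; if $d^k=0$ set $t_k=\tau$; otherwise $t_k=\max\{t\in\{1,\gamma,\gamma^2,\dots\}: f(x^k+td^k)\le f(x^k)-\beta t\|d^k\|^2\}$. *)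

theory Defs
  imports "HOL-Analysis.Analysis"
begin

text \<open>Iterations are indexed
from 0 (the paper indexes from 1; this is only a shift). The gradient of f
is the function Df, i.e. GDERIV f x :> Df x for all x.\<close>

definition backtracking_step ::
  "('a::real_inner \<Rightarrow> real) \<Rightarrow> real \<Rightarrow> real \<Rightarrow> real \<Rightarrow> 'a \<Rightarrow> 'a \<Rightarrow> real \<Rightarrow> bool" where
  "backtracking_step f \<beta> \<gamma> \<tau> xk dk tk \<longleftrightarrow>
     (if dk = 0 then tk = \<tau>
      else (let S = {t. (\<exists>j::nat. t = \<gamma> ^ j) \<and> f (xk + t *\<^sub>R dk) \<le> f xk - \<beta> * t * (norm dk)\<^sup>2}
            in tk \<in> S \<and> (\<forall>s\<in>S. s \<le> tk)))"

definition IRG_backtracking ::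
  "('a::real_inner \<Rightarrow> real) \<Rightarrow> ('a \<Rightarrow> 'a) \<Rightarrow> real \<Rightarrow> real \<Rightarrow> (nat \<Rightarrow> real)
   \<Rightarrow> real \<Rightarrow> real \<Rightarrow> real
   \<Rightarrow> (nat \<Rightarrow> 'a) \<Rightarrow> (nat \<Rightarrow> 'a) \<Rightarrow> (nat \<Rightarrow> real) \<Rightarrow> (nat \<Rightarrow> real)
   \<Rightarrow> (nat \<Rightarrow> 'a) \<Rightarrow> (nat \<Rightarrow> real) \<Rightarrow> bool" where
  "IRG_backtracking f Df \<mu> \<theta> \<rho> \<beta> \<gamma> \<tau> x g eps r d t \<longleftrightarrow>
     eps 0 > 0 \<and> r 0 > 0 \<and> 0 < \<mu> \<and> \<mu> < 1 \<and> 0 < \<theta> \<and> \<theta> < 1 \<and> (\<forall>k. \<rho> k > 0) \<and>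
     0 < \<beta> \<and> \<beta> < 1 \<and> 0 < \<gamma> \<and> \<gamma> < 1 \<and> 0 < \<tau> \<and> \<tau> < 1 \<and>
     (\<forall>k.
        norm (g k - Df (x k)) \<le> min (eps k) (\<rho> k) \<and>
        (if norm (g k) \<le> r k + eps k
         then r (Suc k) = \<mu> * r k \<and> eps (Suc k) = \<theta> * eps k \<and> d k = 0
         else r (Suc k) = r k \<and> eps (Suc k) = eps k \<and>
              d k = - ((norm (g k) - eps k) / norm (g k)) *\<^sub>R g k) \<and>
        t k > 0 \<and> backtracking_step f \<beta> \<gamma> \<tau> (x k) (d k) (t k) \<and>
        x (Suc k) = x k + t k *\<^sub>R d k)"

end

theory Submission imports Defs begin

lemma line_deriv:
  assumes grad: "\<And>y. GDERIV f y :> Df y"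
  shows "((\<lambda>u. f (x + u *\<^sub>R d)) has_real_derivative (Df (x + u *\<^sub>R d) \<bullet> d)) (at u)"
proof -
  have h1: "((\<lambda>u. x + u *\<^sub>R d) has_derivative (\<lambda>h. h *\<^sub>R d)) (at u)"
    by (auto intro!: derivative_eq_intros)
  have h2: "(f has_derivative (\<lambda>h. h \<bullet> Df (x + u *\<^sub>R d))) (at (x + u *\<^sub>R d))"
    using grad[of "x + u *\<^sub>R d"] by (simp add: gderiv_def)
  have "((\<lambda>u. f (x + u *\<^sub>R d)) has_derivative (\<lambda>h. (h *\<^sub>R d) \<bullet> Df (x + u *\<^sub>R d))) (at u)"
    using has_derivative_compose[OF h1 h2] by (simp add: o_def)
  then show ?thesis
    unfolding has_field_derivative_def
    by (rule has_derivative_subst) (auto simp: inner_commute mult.commute)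
qed

lemma descent:
  fixes f :: "'a::real_inner \<Rightarrow> real"
  assumes grad: "\<And>y. GDERIV f y :> Df y"
    and lip: "L-lipschitz_on U Df"
    and seg: "\<And>u. 0 \<le> u \<Longrightarrow> u \<le> s \<Longrightarrow> x + u *\<^sub>R d \<in> U"
    and s: "0 \<le> s"
  shows "f (x + s *\<^sub>R d) \<le> f x + s * (Df x \<bullet> d) + L * s^2 * (norm d)^2 / 2"
proof -
  define \<phi> where "\<phi> u = f (x + u *\<^sub>R d) - u * (Df x \<bullet> d) - L * u^2 * (norm d)^2 / 2" for u
  have "\<phi> s \<le> \<phi> 0"
  proof (rule DERIV_nonpos_imp_nonincreasing[OF s])
    fix u assume u: "0 \<le> u" "u \<le> s"
    have D: "(\<phi> has_real_derivative (Df (x + u *\<^sub>R d) \<bullet> d - Df x \<bullet> d - L * (2 * u) * (norm d)^2 / 2)) (at u)"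
      unfolding \<phi>_def
      by (rule line_deriv[OF grad] derivative_eq_intros refl | simp)+
    have L0: "0 \<le> L" using lip by (simp add: lipschitz_on_def)
    have "dist (Df (x + u *\<^sub>R d)) (Df (x + 0 *\<^sub>R d)) \<le> L * dist (x + u *\<^sub>R d) (x + 0 *\<^sub>R d)"
      using lip seg[OF u] seg[of 0] s by (simp add: lipschitz_on_def)
    then have n: "norm (Df (x + u *\<^sub>R d) - Df x) \<le> L * (u * norm d)"
      using u by (simp add: dist_norm)
    have "Df (x + u *\<^sub>R d) \<bullet> d - Df x \<bullet> d = (Df (x + u *\<^sub>R d) - Df x) \<bullet> d"
      by (simp add: inner_diff_left)
    also have "\<dots> \<le> norm (Df (x + u *\<^sub>R d) - Df x) * norm d" by (rule norm_cauchy_schwarz)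
    also have "\<dots> \<le> L * (u * norm d) * norm d" by (rule mult_right_mono[OF n]) simp
    finally have "Df (x + u *\<^sub>R d) \<bullet> d - Df x \<bullet> d - L * (2 * u) * (norm d)^2 / 2 \<le> 0"
      by (simp add: power2_eq_square algebra_simps)
    with D show "\<exists>y. (\<phi> has_real_derivative y) (at u) \<and> y \<le> 0" by blast
  qed
  then show ?thesis by (simp add: \<phi>_def)
qed
lemma step_bound:
  fixes f :: "'a::real_inner \<Rightarrow> real"
  assumes grad: "\<And>y. GDERIV f y :> Df y"
    and lip: "L-lipschitz_on (ball xb \<delta>) Df" and L: "L > 0" and \<delta>: "\<delta> > 0"
    and M0: "M0 \<ge> 0" and bnd: "\<forall>y\<in>ball xb \<delta>. norm (Df y) \<le> M0"
    and xk: "dist x xb < \<delta>/2"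
    and gk: "norm (g - Df x) \<le> e" and gbig: "norm g > e"
    and dk: "d = - ((norm g - e) / norm g) *\<^sub>R g"
    and bt: "backtracking_step f \<beta> \<gamma> \<tau> x d t"
    and \<beta>: "0 < \<beta>" "\<beta> < 1" and \<gamma>: "0 < \<gamma>" "\<gamma> < 1"
    and dne: "d \<noteq> 0"
  shows "t \<ge> \<gamma> * min 1 (min (2*(1-\<beta>)/L) (\<delta>/(2*(M0+1))))"
proof -
  define S where "S = {t. (\<exists>j::nat. t = \<gamma> ^ j) \<and> f (x + t *\<^sub>R d) \<le> f x - \<beta> * t * (norm d)\<^sup>2}"
  have tS: "t \<in> S" and tmax: "\<forall>s\<in>S. s \<le> t"
    using bt dne unfolding backtracking_step_def S_def Let_def by auto
  obtain j where tj: "t = \<gamma> ^ j" using tS S_def by auto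
  define m where "m = min (2*(1-\<beta>)/L) (\<delta>/(2*(M0+1)))"
  have m0: "m > 0" using \<beta> L \<delta> M0 by (simp add: m_def)
  have e0: "e \<ge> 0" using gk norm_ge_zero order_trans by blast
  have g0: "norm g > 0" using gbig e0 by linarith
  have nd: "norm d = norm g - e"
    using g0 gbig by (simp add: dk)
  have gd: "g \<bullet> d = - ((norm g - e) * norm g)"
    using g0 by (simp add: dk power2_norm_eq_inner[symmetric] power2_eq_square)
  have "Df x \<bullet> d = g \<bullet> d + (Df x - g) \<bullet> d" by (simp add: inner_diff_left)
  also have "(Df x - g) \<bullet> d \<le> norm (Df x - g) * norm d" by (rule norm_cauchy_schwarz)
  also have "\<dots> \<le> e * norm d" using gk by (intro mult_right_mono) (auto simp: norm_minus_commute)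
  finally have Dfd0: "Df x \<bullet> d \<le> g \<bullet> d + e * norm d" by simp
  have Dfd: "Df x \<bullet> d \<le> - ((norm d)^2)"
  proof -
    have "g \<bullet> d + e * norm d = - ((norm g - e) * (norm g - e))" unfolding gd nd by (simp add: algebra_simps)
    then show ?thesis using Dfd0 nd by (simp add: power2_eq_square)
  qed
  have xin: "x \<in> ball xb \<delta>" using xk \<delta> by (simp add: dist_commute)
  have "norm g \<le> norm (Df x) + e"
    using gk norm_triangle_ineq2[of g "Df x"] by linarith
  moreover have "norm (Df x) \<le> M0" using bnd xin by blast
  ultimately have ndM: "norm d \<le> M0" using nd by linarith
  show ?thesis
  proof (cases j)
    case 0
    have "\<gamma> * min 1 m \<le> \<gamma> * 1" using \<gamma> by (intro mult_left_mono) auto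
    moreover have "t = 1" using tj 0 by simp
    ultimately have "\<gamma> * min 1 m \<le> t" using \<gamma> by linarith
    then show ?thesis unfolding m_def .
  next
    case (Suc i)
    define s where "s = \<gamma> ^ i"
    have s0: "s > 0" using \<gamma> by (simp add: s_def)
    have ts: "t = \<gamma> * s" using tj Suc by (simp add: s_def)
    have "s > m"
    proof (rule ccontr)
      assume "\<not> s > m"
      then have sm: "s \<le> m" by simp
      have sL: "L * s \<le> 2*(1-\<beta>)" using sm L by (simp add: m_def field_simps)
      have sM: "s * (M0+1) \<le> \<delta>/2" using sm M0 by (simp add: m_def field_simps)
      have seg: "x + u *\<^sub>R d \<in> ball xb \<delta>" if "0 \<le> u" "u \<le> s" for u
      proof -
        have "dist x (x + u *\<^sub>R d) = norm (u *\<^sub>R d)" by (simp add: dist_norm)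
        then have "dist xb (x + u *\<^sub>R d) \<le> dist xb x + norm (u *\<^sub>R d)"
          using dist_triangle[of xb "x + u *\<^sub>R d" x] by simp
        also have "norm (u *\<^sub>R d) = u * norm d" using that by simp
        also have "u * norm d \<le> s * M0" using that ndM by (intro mult_mono) auto
        also have "s * M0 \<le> s * (M0+1)" using s0 by simp
        finally show ?thesis using sM xk by (simp add: dist_commute)
      qed
      have desc: "f (x + s *\<^sub>R d) \<le> f x + s * (Df x \<bullet> d) + L * s^2 * (norm d)^2 / 2"
        by (rule descent[OF grad lip seg]) (use s0 in auto)
      have "s * (Df x \<bullet> d) \<le> s * (- ((norm d)^2))" using mult_left_mono[OF Dfd, of s] s0 by simp
      moreover have "L * s^2 * (norm d)^2 / 2 \<le> (1-\<beta>) * s * (norm d)^2"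
      proof -
        have "L * s^2 * (norm d)^2 / 2 = (L * s) * (s * (norm d)^2) / 2" by (simp add: power2_eq_square)
        also have "\<dots> \<le> (2*(1-\<beta>)) * (s * (norm d)^2) / 2"
          using sL s0 by (intro divide_right_mono mult_right_mono) auto
        finally show ?thesis by (simp add: algebra_simps)
      qed
      ultimately have "f (x + s *\<^sub>R d) \<le> f x - \<beta> * s * (norm d)\<^sup>2"
        using desc by (simp add: algebra_simps)
      then have "s \<in> S" unfolding S_def s_def by auto
      then have "s \<le> \<gamma> * s" using tmax ts by auto
      then show False using s0 \<gamma> by simp
    qed
    then have "\<gamma> * m \<le> t" using ts \<gamma> by simp
    moreover have "\<gamma> * min 1 m \<le> \<gamma> * m" using \<gamma> by simp
    ultimately show ?thesis by (simp add: m_def)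
  qed
qed

theorem mainTheorem15:
  fixes f :: "'a::euclidean_space \<Rightarrow> real" and Df :: "'a \<Rightarrow> 'a"
    and x g d :: "nat \<Rightarrow> 'a" and eps r t \<rho> :: "nat \<Rightarrow> real"
    and \<mu> \<theta> \<beta> \<gamma> \<tau> :: real and J :: "nat set" and xbar :: 'a
  assumes grad: "\<And>y. GDERIV f y :> Df y"
    and cont: "continuous_on UNIV Df"
    and alg: "IRG_backtracking f Df \<mu> \<theta> \<rho> \<beta> \<gamma> \<tau> x g eps r d t"
    and rho_lim: "\<rho> \<longlonglongrightarrow> 0"
    and J_inf: "infinite J"
    and conv: "\<forall>e>0. \<exists>N. \<forall>k\<in>J. N \<le> k \<longrightarrow> dist (x k) xbar < e"
    and lip: "\<exists>\<delta>>0. \<exists>L. L-lipschitz_on (ball xbar \<delta>) Df"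
  shows "(INF k\<in>J. t k) > 0"
proof -
  obtain \<delta> L0 where \<delta>: "\<delta> > 0" and lip0: "L0-lipschitz_on (ball xbar \<delta>) Df" using lip by blast
  define L where "L = L0 + 1"
  have L0: "0 \<le> L0" using lip0 by (rule lipschitz_on_nonneg)
  have lipL: "L-lipschitz_on (ball xbar \<delta>) Df" using lip0 by (rule lipschitz_on_le) (simp add: L_def)
  have L: "L > 0" using L0 by (simp add: L_def)
  define M0 where "M0 = norm (Df xbar) + L * \<delta>"
  have M0: "M0 \<ge> 0" using L \<delta> by (simp add: M0_def)
  have bnd: "\<forall>y\<in>ball xbar \<delta>. norm (Df y) \<le> M0"
  proof
    fix y assume y: "y \<in> ball xbar \<delta>"
    have "norm (Df y - Df xbar) \<le> L * norm (y - xbar)"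
      by (rule lipschitz_on_normD[OF lipL y]) (use \<delta> in simp)
    also have "\<dots> \<le> L * \<delta>" using y L by (intro mult_left_mono) (auto simp: dist_norm norm_minus_commute)
    finally show "norm (Df y) \<le> M0" unfolding M0_def using norm_triangle_ineq2[of "Df y" "Df xbar"] by linarith
  qed
  obtain N where N: "\<forall>k\<in>J. N \<le> k \<longrightarrow> dist (x k) xbar < \<delta>/2" using conv \<delta> by (meson half_gt_zero)
  note A = alg[unfolded IRG_backtracking_def]
  have rpos: "r k > 0" for k
  proof (induction k)
    case 0 then show ?case using A by simp
  next
    case (Suc k)
    from A have "(if norm (g k) \<le> r k + eps k
         then r (Suc k) = \<mu> * r k \<and> eps (Suc k) = \<theta> * eps k \<and> d k = 0
         else r (Suc k) = r k \<and> eps (Suc k) = eps k \<and>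
              d k = - ((norm (g k) - eps k) / norm (g k)) *\<^sub>R g k)" by blast
    then show ?case using Suc A by (auto split: if_splits)
  qed
  define c where "c = min \<tau> (\<gamma> * min 1 (min (2*(1-\<beta>)/L) (\<delta>/(2*(M0+1)))))"
  have c0: "c > 0" using A L \<delta> M0 by (simp add: c_def)
  have late: "c \<le> t k" if k: "k \<in> J" "N \<le> k" for k
  proof (cases "d k = 0")
    case True
    then show ?thesis using A by (simp add: c_def backtracking_step_def)
  next
    case False
    have gk: "norm (g k - Df (x k)) \<le> eps k" using A by simp
    have ifk: "(if norm (g k) \<le> r k + eps k
         then r (Suc k) = \<mu> * r k \<and> eps (Suc k) = \<theta> * eps k \<and> d k = 0
         else r (Suc k) = r k \<and> eps (Suc k) = eps k \<and>
              d k = - ((norm (g k) - eps k) / norm (g k)) *\<^sub>R g k)" using A by blast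
    have big: "\<not> norm (g k) \<le> r k + eps k" using ifk False by auto
    then have dk: "d k = - ((norm (g k) - eps k) / norm (g k)) *\<^sub>R g k" using ifk by auto
    have gbig: "norm (g k) > eps k" using big rpos[of k] by linarith
    have bt: "backtracking_step f \<beta> \<gamma> \<tau> (x k) (d k) (t k)" using A by blast
    have "t k \<ge> \<gamma> * min 1 (min (2*(1-\<beta>)/L) (\<delta>/(2*(M0+1))))"
      by (rule step_bound[OF grad lipL L \<delta> M0 bnd _ gk gbig dk bt _ _ _ _ False])
         (use N k A in auto)
    then show ?thesis by (simp add: c_def)
  qed
  define b where "b = Min (insert c (t ` {k\<in>J. k < N}))"
  have fin: "finite (insert c (t ` {k\<in>J. k < N}))" by simp
  have b0: "b > 0" unfolding b_def using fin c0 A by (subst Min_gr_iff) auto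
  have bk: "b \<le> t k" if "k \<in> J" for k
  proof (cases "N \<le> k")
    case True
    then have "b \<le> c" unfolding b_def using fin by (intro Min_le) auto
    then show ?thesis using late[OF that True] by linarith
  next
    case False
    then show ?thesis unfolding b_def using fin that by (intro Min_le) auto
  qed
  have "J \<noteq> {}" using J_inf by auto
  then have "b \<le> (INF k\<in>J. t k)" using bk by (intro cINF_greatest) auto
  then show ?thesis using b0 by linarith
qed

end
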